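(* Fix $\rho\in(-1,1)$, real numbers $\mu_D$, $\sigma_D>0$, $\mu_L\ge0$, $\sigma_L>0$ and an integer $n\ge1$. Then the function $m\mapsto B_m(\rho)$ (with $B_m$ the function defined in the context, with lead-time forecast window $m$) is strictly decreasing on the positive integers $m\ge1$.
   Context: For fixed real parameters $\mu_D$, $\sigma_D>0$, $\mu_L\ge0$, $\sigma_L\ge0$ and integers $n,m\ge1$, define for $\rho\in(-1,1)$ $$B_m(\rho)=\frac{2\sigma_L^2}{n^2m^2}\left(m(1-\rho^n)+\frac{n(1+\rho)}{1-\rho}-\frac{(1+\rho^2)(1-\rho^n)}{(1-\rho)^2}\right)+\frac{2\sigma_L^2\mu_D^2}{\sigma_D^2 m^2}+\left(\frac{2\mu_L^2}{n^2}+\frac{2\mu_L}{n}\right)(1-\rho^n)+1 .$$ (This is the bullwhip measure $\operatorname{Var}q_t/\operatorname{Var}D_t$ for AR(1) demand with autocorrelation $\rho$, mean $\mu_D$ and variance $\sigma_D^2$, i.i.d. lead times with mean $\mu_L$ and variance $\sigma_L^2$, moving-average demand forecast over $n$ periods and moving-average lead-time forecast over $m$ periods, under the order-up-to policy.) *)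

theory Defs
  imports Complex_Main
begin

text \<open>Bullwhip measure B_m(rho) for AR(1) demand, MA(n) demand forecast and MA(m)
  lead-time forecast, as defined in the paper context.\<close>
definition bullwhip ::
  "real \<Rightarrow> real \<Rightarrow> real \<Rightarrow> real \<Rightarrow> nat \<Rightarrow> nat \<Rightarrow> real \<Rightarrow> real" where
  "bullwhip \<mu>D \<sigma>D \<mu>L \<sigma>L n m \<rho> =
     2 * \<sigma>L^2 / (real n ^ 2 * real m ^ 2) *
       (real m * (1 - \<rho> ^ n) + real n * (1 + \<rho>) / (1 - \<rho>)
        - (1 + \<rho>^2) * (1 - \<rho> ^ n) / (1 - \<rho>)^2)
     + 2 * \<sigma>L^2 * \<mu>D^2 / (\<sigma>D^2 * real m ^ 2)
     + (2 * \<mu>L^2 / real n ^ 2 + 2 * \<mu>L / real n) * (1 - \<rho> ^ n) + 1"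

end

theory Submission
  imports Defs
begin

lemma keyP:
  fixes x :: real and n :: nat
  assumes "-1 < x" "x < 1" "n \<ge> 1"
  shows "3 * real n * (1 - x^2) - (1 - x^n) * (1 + 4*x + x^2) > 0"
proof -
  have tpos: "1 - x^n > 0"
  proof -
    have "\<bar>x\<bar>^n < 1" using assms by (simp add: power_less_one_iff abs_less_iff)
    hence "\<bar>x^n\<bar> < 1" by (simp add: power_abs)
    thus ?thesis by linarith
  qed
  have tle: "1 - x^n \<le> real n * (1 - x)"
  proof (cases "x \<ge> 0")
    case True
    have "1 + real n * (x - 1) \<le> (1 + (x - 1))^n"
      by (rule Bernoulli_inequality) (use True in auto)
    thus ?thesis by (simp add: algebra_simps)
  next
    case False
    have "\<bar>x\<bar>^n \<le> \<bar>x\<bar>^1"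
      by (rule power_decreasing) (use assms False in auto)
    hence "\<bar>x^n\<bar> \<le> \<bar>x\<bar>" by (simp add: power_abs)
    hence "1 - x^n \<le> 1 - x" using False by linarith
    also have "\<dots> = 1 * (1 - x)" by simp
    also have "\<dots> \<le> real n * (1 - x)"
      by (rule mult_right_mono) (use assms in auto)
    finally show ?thesis .
  qed
  have n1: "real n \<ge> 1" using assms by simp
  show ?thesis
  proof (cases "1 + 4*x + x^2 > 0")
    case True
    have "(1 - x^n) * (1 + 4*x + x^2) \<le> real n * (1 - x) * (1 + 4*x + x^2)"
      using tle True by (intro mult_right_mono) auto
    moreover have "real n * (1 - x) * (1 + 4*x + x^2) < 3 * real n * (1 - x^2)"
    proof -
      have "real n * (1 - x) * (1 + 4*x + x^2) - 3 * real n * (1 - x^2)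
            = - (real n * ((1 - x) * ((1 - x) * (2 + x))))"
        by (simp add: algebra_simps power2_eq_square)
      moreover have "real n * ((1 - x) * ((1 - x) * (2 + x))) > 0"
        using assms n1 by (intro mult_pos_pos) auto
      ultimately show ?thesis by linarith
    qed
    ultimately show ?thesis by linarith
  next
    case False
    have "(1 - x^n) * (1 + 4*x + x^2) \<le> 0"
      using False tpos by (intro mult_nonneg_nonpos) auto
    moreover have "3 * real n * (1 - x^2) > 0"
    proof -
      have "1 - x^2 = (1-x)*(1+x)" by (simp add: algebra_simps power2_eq_square)
      thus ?thesis using assms n1 by simp
    qed
    ultimately show ?thesis by linarith
  qed
qed

lemma diffid: fixes a b M :: real assumes "M \<ge> 1"
  shows "a / M + b / M^2 - (a / (M+1) + b / (M+1)^2) = (a * (M*(M+1)) + b * (2*M+1)) / (M^2 * (M+1)^2)"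
proof -
  have h: "M \<noteq> 0" "M + 1 \<noteq> 0" using assms by auto
  show ?thesis using h by (simp add: divide_simps power2_eq_square) (simp add: algebra_simps)
qed

lemma step:
  fixes \<rho> \<mu>D \<sigma>D \<mu>L \<sigma>L :: real and n m :: nat
  assumes "-1 < \<rho>" and "\<rho> < 1"
    and "\<sigma>D > 0" and "\<mu>L \<ge> 0" and "\<sigma>L > 0" and "n \<ge> 1" and "m \<ge> 1"
  shows "bullwhip \<mu>D \<sigma>D \<mu>L \<sigma>L n (Suc m) \<rho> < bullwhip \<mu>D \<sigma>D \<mu>L \<sigma>L n m \<rho>"
proof -
  define x where "x = \<rho>"
  define t where "t = 1 - x^n"
  define K where "K = real n * (1 + x) / (1 - x) - (1 + x^2) * t / (1 - x)^2"
  define \<alpha> where "\<alpha> = 2 * \<sigma>L^2 / real n ^ 2"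
  define \<beta> where "\<beta> = 2 * \<sigma>L^2 * \<mu>D^2 / \<sigma>D^2"
  define c where "c = (2 * \<mu>L^2 / real n ^ 2 + 2 * \<mu>L / real n) * (1 - \<rho> ^ n) + 1"
  define M where "M = real m"
  have M1: "M \<ge> 1" using assms M_def by simp
  have apos: "\<alpha> > 0" using assms unfolding \<alpha>_def by simp
  have bnn: "\<beta> \<ge> 0" unfolding \<beta>_def by simp
  have tpos: "t > 0"
  proof -
    have "\<bar>x\<bar>^n < 1" using assms x_def by (simp add: power_less_one_iff abs_less_iff)
    hence "\<bar>x^n\<bar> < 1" by (simp add: power_abs)
    thus ?thesis unfolding t_def by linarith
  qed
  have D: "(1 - x)^2 > 0" using assms x_def by simp
  have KP: "(2*t + 3*K) * (1-x)^2 = 3 * real n * (1 - x^2) - t * (1 + 4*x + x^2)"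
  proof -
    have nz: "1 - x \<noteq> 0" using assms x_def by simp
    have "K * (1-x)^2 = real n * (1 + x) * (1 - x) - (1 + x^2) * t"
    proof -
      have a: "real n * (1 + x) / (1 - x) * (1-x)^2 = real n * (1 + x) * (1 - x)"
        using nz by (simp add: power2_eq_square)
      have b: "(1 + x^2) * t / (1 - x)^2 * (1-x)^2 = (1 + x^2) * t"
        using nz by simp
      show ?thesis unfolding K_def using a b by (simp add: left_diff_distrib)
    qed
    thus ?thesis by (simp add: algebra_simps power2_eq_square)
  qed
  have Kpos: "2*t + 3*K > 0"
  proof -
    have P: "3 * real n * (1 - x^2) - t * (1 + 4*x + x^2) > 0"
      unfolding t_def using keyP[of x n] assms x_def by simp
    have "(2*t + 3*K) * (1-x)^2 > 0"
      unfolding KP using P .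
    thus ?thesis using D by (simp add: zero_less_mult_iff)
  qed
  have bw: "\<And>k::nat. k \<ge> 1 \<Longrightarrow> bullwhip \<mu>D \<sigma>D \<mu>L \<sigma>L n k \<rho>
      = \<alpha> * t / real k + (\<alpha> * K + \<beta>) / (real k)^2 + c"
  proof -
    fix k :: nat assume k: "k \<ge> 1"
    have k0: "real k \<noteq> 0" using k by simp
    have e1: "2 * \<sigma>L^2 / (real n ^ 2 * real k ^ 2) = \<alpha> / (real k)^2"
      unfolding \<alpha>_def by simp
    have e2: "2 * \<sigma>L^2 * \<mu>D^2 / (\<sigma>D^2 * real k ^ 2) = \<beta> / (real k)^2"
      unfolding \<beta>_def by simp
    have e3: "real k * (1 - \<rho> ^ n) + real n * (1 + \<rho>) / (1 - \<rho>)
        - (1 + \<rho>^2) * (1 - \<rho> ^ n) / (1 - \<rho>)^2 = real k * t + K"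
      unfolding K_def t_def x_def by simp
    have e4: "\<alpha> / (real k)^2 * (real k * t + K) = \<alpha> * t / real k + \<alpha> * K / (real k)^2"
      using k0 by (simp add: power2_eq_square divide_simps) (simp add: algebra_simps)
    have "bullwhip \<mu>D \<sigma>D \<mu>L \<sigma>L n k \<rho> = \<alpha> / (real k)^2 * (real k * t + K) + \<beta> / (real k)^2 + c"
      unfolding bullwhip_def e1 e2 e3 c_def by simp
    also have "\<dots> = \<alpha> * t / real k + (\<alpha> * K + \<beta>) / (real k)^2 + c"
      unfolding e4 by (simp add: add_divide_distrib)
    finally show "bullwhip \<mu>D \<sigma>D \<mu>L \<sigma>L n k \<rho> = \<alpha> * t / real k + (\<alpha> * K + \<beta>) / (real k)^2 + c" .
  qed
  have ineq: "\<alpha> * t * (M*(M+1)) + (\<alpha> * K + \<beta>) * (2*M+1) > 0"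
  proof -
    have eq3: "3*(t*(M*(M+1)) + K*(2*M+1)) = t*(3*M*M - M - 2) + (2*M+1)*(2*t+3*K)"
      by (simp add: algebra_simps)
    moreover have "t*(3*M*M - M - 2) \<ge> 0"
    proof -
      have "3*M*M - M - 2 = (M-1)*(3*M+2)" by (simp add: algebra_simps)
      also have "\<dots> \<ge> 0" using M1 by simp
      finally show ?thesis using tpos by simp
    qed
    moreover have "(2*M+1)*(2*t+3*K) > 0" using M1 Kpos by simp
    ultimately have "3*(t*(M*(M+1)) + K*(2*M+1)) > 0"
      by (metis add_nonneg_pos)
    hence "t*(M*(M+1)) + K*(2*M+1) > 0" by simp
    hence "\<alpha> * (t*(M*(M+1)) + K*(2*M+1)) > 0" using apos by simp
    moreover have "\<beta> * (2*M+1) \<ge> 0" using bnn M1 by simp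
    ultimately show ?thesis by (simp add: algebra_simps)
  qed
  have "\<alpha> * t / M + (\<alpha> * K + \<beta>) / M^2 - (\<alpha> * t / (M+1) + (\<alpha> * K + \<beta>) / (M+1)^2)
        = (\<alpha> * t * (M*(M+1)) + (\<alpha> * K + \<beta>) * (2*M+1)) / (M^2 * (M+1)^2)"
    by (rule diffid[OF M1])
  also have "\<dots> > 0" using ineq M1 by simp
  finally have "\<alpha> * t / M + (\<alpha> * K + \<beta>) / M^2 + c > \<alpha> * t / (M+1) + (\<alpha> * K + \<beta>) / (M+1)^2 + c"
    by linarith
  moreover have "real (Suc m) = M + 1" unfolding M_def by simp
  ultimately show ?thesis using bw[of m] bw[of "Suc m"] assms unfolding M_def
    by (simp only: of_nat_Suc add.commute[of 1] le_SucI)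
qed

theorem mainTheorem9:
  fixes \<rho> \<mu>D \<sigma>D \<mu>L \<sigma>L :: real and n :: nat
  assumes "-1 < \<rho>" and "\<rho> < 1"
    and "\<sigma>D > 0" and "\<mu>L \<ge> 0" and "\<sigma>L > 0" and "n \<ge> 1"
  shows "strict_antimono_on {1..} (\<lambda>m::nat. bullwhip \<mu>D \<sigma>D \<mu>L \<sigma>L n m \<rho>)"
proof (rule monotone_onI)
  fix a b :: nat
  assume ab: "a \<in> {1..}" "b \<in> {1..}" "a < b"
  define f where "f = (\<lambda>m::nat. bullwhip \<mu>D \<sigma>D \<mu>L \<sigma>L n m \<rho>)"
  have a1: "a \<ge> 1" using ab by simp
  have st: "\<And>j. j \<ge> 1 \<Longrightarrow> f (Suc j) < f j"
    unfolding f_def by (rule step[OF assms])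
  have ind: "f (a + Suc k) < f a" for k
  proof (induction k)
    case 0 show ?case using st[OF a1] by simp
  next
    case (Suc k)
    have "f (Suc (a + Suc k)) < f (a + Suc k)" by (rule st) (use a1 in simp)
    thus ?case using Suc.IH by simp
  qed
  obtain k where "b = Suc (a + k)" using less_imp_Suc_add[OF ab(3)] by (elim exE)
  hence "b = a + Suc k" by simp
  hence "f b < f a" using ind[of k] by simp
  thus "bullwhip \<mu>D \<sigma>D \<mu>L \<sigma>L n b \<rho> < bullwhip \<mu>D \<sigma>D \<mu>L \<sigma>L n a \<rho>"
    unfolding f_def .
qed

end
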